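(* Let $H$ be a dense 3-graph and $T$ a triangle. Then $H$ is forbidden for $T$ if and only if $H$ is exactly forbidden for $T$.
   Context: A 3-graph is a 3-uniform hypergraph. For a 3-graph $G$ and a 3-graph $F$, $G$ is $F$-free if it has no (not necessarily induced) subhypergraph isomorphic to $F$. Let $T$ be a triangle with side lengths $a,b,c$, $\varepsilon>0$, $\varepsilon'=\varepsilon\min\{a,b,c\}$; a triangle $A'B'C'$ is $\varepsilon$-congruent to $T$ if there are $A,B,C\in\mathbb{R}^2$ with $ABC$ congruent to $T$ and $A',B',C'$ within distance $\varepsilon'$ of $A,B,C$ respectively. For finite $P\subseteq\mathbb{R}^2$, $\mathcal{H}(T,P,\varepsilon)$ is the 3-graph with vertex set $P$ whose edges are the triples forming triangles $\varepsilon$-congruent to $T$. A 3-graph $H$ is forbidden for $T$ if there exists $\varepsilon>0$ such that for every point set $P\subseteq\mathbb{R}^2$ with $|P|=|V(H)|$, $\mathcal{H}(T,P,\varepsilon)$ is $H$-free. A 3-graph $H$ with vertex set $[k]$ is exactly forbidden for $T$ if there do not exist points $p_1,\dots,p_k\in\mathbb{R}^2$ (not necessarily distinct) such that for every edge $xyz\in E(H)$ the triangle $p_xp_yp_z$ is congruent to $T$. A 3-graph $H$ on $k$ vertices is dense if there is an ordering $v_1,\dots,v_k$ of its vertices such that for every $3\le i\le k$ there is an edge of $H[\{v_1,\dots,v_i\}]$ containing $v_i$. *)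

theory Defs
  imports "HOL-Analysis.Analysis" "HOL-Library.Multiset"
begin

type_synonym point = "real^2"

text \<open>A triangle T is given by its side lengths (a, b, c); it is a genuine
(non-degenerate) triangle iff all sides are positive and the strict triangle
inequalities hold.\<close>
definition is_triangle :: "real \<times> real \<times> real \<Rightarrow> bool" where
  "is_triangle T = (case T of (a, b, c) \<Rightarrow>
     0 < a \<and> 0 < b \<and> 0 < c \<and> a < b + c \<and> b < a + c \<and> c < a + b)"

definition congruent_tri :: "real \<times> real \<times> real \<Rightarrow> point \<Rightarrow> point \<Rightarrow> point \<Rightarrow> bool" where
  "congruent_tri T A B C = (case T of (a, b, c) \<Rightarrow>
     mset [dist A B, dist B C, dist C A] = mset [a, b, c])"

definition eps_congruent ::
  "real \<times> real \<times> real \<Rightarrow> real \<Rightarrow> point \<Rightarrow> point \<Rightarrow> point \<Rightarrow> bool" where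
  "eps_congruent T \<epsilon> A' B' C' = (case T of (a, b, c) \<Rightarrow>
     (\<exists>A B C. congruent_tri T A B C \<and>
        dist A' A \<le> \<epsilon> * min a (min b c) \<and>
        dist B' B \<le> \<epsilon> * min a (min b c) \<and>
        dist C' C \<le> \<epsilon> * min a (min b c)))"

definition three_graph :: "'v set \<Rightarrow> 'v set set \<Rightarrow> bool" where
  "three_graph V E = (finite V \<and> (\<forall>e\<in>E. e \<subseteq> V \<and> card e = 3))"

definition tri_edges :: "real \<times> real \<times> real \<Rightarrow> point set \<Rightarrow> real \<Rightarrow> point set set" where
  "tri_edges T P \<epsilon> = {{x, y, z} | x y z. x \<in> P \<and> y \<in> P \<and> z \<in> P \<and>
      x \<noteq> y \<and> y \<noteq> z \<and> x \<noteq> z \<and> eps_congruent T \<epsilon> x y z}"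

definition contains_copy :: "'w set \<Rightarrow> 'w set set \<Rightarrow> 'v set \<Rightarrow> 'v set set \<Rightarrow> bool" where
  "contains_copy W F V E = (\<exists>f. inj_on f V \<and> f ` V \<subseteq> W \<and> (\<forall>e\<in>E. f ` e \<in> F))"

definition forbidden :: "'v set \<Rightarrow> 'v set set \<Rightarrow> real \<times> real \<times> real \<Rightarrow> bool" where
  "forbidden V E T = (\<exists>\<epsilon>>0. \<forall>P :: point set. finite P \<and> card P = card V \<longrightarrow>
      \<not> contains_copy P (tri_edges T P \<epsilon>) V E)"

definition exactly_forbidden :: "'v set \<Rightarrow> 'v set set \<Rightarrow> real \<times> real \<times> real \<Rightarrow> bool" where
  "exactly_forbidden V E T = (\<not> (\<exists>p :: 'v \<Rightarrow> point. \<forall>e\<in>E.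
      \<exists>x y z. e = {x, y, z} \<and> congruent_tri T (p x) (p y) (p z)))"

definition dense3 :: "'v set \<Rightarrow> 'v set set \<Rightarrow> bool" where
  "dense3 V E = (\<exists>vs. distinct vs \<and> set vs = V \<and>
      (\<forall>i. 2 \<le> i \<and> i < length vs \<longrightarrow>
         (\<exists>e\<in>E. e \<subseteq> set (take (Suc i) vs) \<and> vs ! i \<in> e)))"

end

theory Submission
  imports Defs
begin

lemma cong_swap: "congruent_tri T A B C \<Longrightarrow> congruent_tri T B A C"
  unfolding congruent_tri_def by (cases T) (auto simp: dist_commute add_mset_commute)

lemma cong_rot: "congruent_tri T A B C \<Longrightarrow> congruent_tri T B C A"
  unfolding congruent_tri_def by (cases T) (auto simp: dist_commute add_mset_commute)

lemma eps_swap: "eps_congruent T e A B C \<Longrightarrow> eps_congruent T e B A C"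
  unfolding eps_congruent_def by (cases T) (auto intro: cong_swap)

lemma eps_rot: "eps_congruent T e A B C \<Longrightarrow> eps_congruent T e B C A"
  unfolding eps_congruent_def by (cases T) (auto intro: cong_rot)

lemma eps_perm:
  assumes h: "eps_congruent T e x y z" and s: "{x,y,z} = {X,Y,Z}" and "X \<noteq> Y" "Y \<noteq> Z" "X \<noteq> Z"
  shows "eps_congruent T e X Y Z"
proof -
  have p: "eps_congruent T e y x z" "eps_congruent T e y z x" "eps_congruent T e z x y"
     "eps_congruent T e x z y" "eps_congruent T e z y x"
    using h by (meson eps_rot eps_swap)+
  have X: "X = x \<or> X = y \<or> X = z" and Y: "Y = x \<or> Y = y \<or> Y = z" and Z: "Z = x \<or> Z = y \<or> Z = z"
    using s by (metis insertCI insertE singletonD)+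
  show ?thesis using X Y Z p h assms(3-5) by metis
qed


lemma perturb:
  fixes p :: "'v \<Rightarrow> point"
  assumes "finite V" "\<delta> > 0"
  shows "\<exists>q. inj_on q V \<and> (\<forall>v\<in>V. dist (q v) (p v) \<le> \<delta>)"
  using assms(1)
proof (induction V rule: finite_induct)
  case empty
  then show ?case by auto
next
  case (insert w F)
  then obtain q where q: "inj_on q F" "\<forall>v\<in>F. dist (q v) (p v) \<le> \<delta>" by blast
  have "uncountable (cball (p w) \<delta>)" using assms(2) by (rule uncountable_cball)
  hence "infinite (cball (p w) \<delta>)" using countable_finite by blast
  hence "\<not> cball (p w) \<delta> \<subseteq> q ` F" using insert(1) finite_subset by blast
  then obtain y where y: "y \<in> cball (p w) \<delta>" "y \<notin> q ` F" by blast
  have "inj_on (q(w := y)) (insert w F)"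
    using q(1) y(2) insert(2) unfolding inj_on_def by (auto simp: image_iff) 
  moreover have "\<forall>v\<in>insert w F. dist ((q(w := y)) v) (p v) \<le> \<delta>"
    using q(2) y(1) insert(2) by (auto simp: dist_commute)
  ultimately show ?case by blast
qed

lemma eps_bound:
  assumes "eps_congruent (a,b,c) e X Y Z" "is_triangle (a,b,c)" "0 \<le> e" "e \<le> 1"
  shows "dist X Y \<le> 3*(a+b+c)"
proof -
  obtain A B C where h: "congruent_tri (a,b,c) A B C" "dist X A \<le> e * min a (min b c)"
    "dist Y B \<le> e * min a (min b c)"
    using assms(1) unfolding eps_congruent_def by auto
  have "dist A B \<in> set_mset (mset [dist A B, dist B C, dist C A])" by simp
  also have "mset [dist A B, dist B C, dist C A] = mset [a,b,c]" using h(1) unfolding congruent_tri_def by simp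
  finally have "dist A B \<in> set_mset (mset [a,b,c])" .
  hence ab: "dist A B \<le> a+b+c" using assms(2) unfolding is_triangle_def by auto
  have m: "e * min a (min b c) \<le> a+b+c" using assms(2-4) unfolding is_triangle_def
  proof -
    have "e * min a (min b c) \<le> min a (min b c)"
      using assms(2-4) unfolding is_triangle_def by (intro mult_left_le_one_le) auto
    moreover have "0 < a" "0 < b" "0 < c" using assms(2) by (auto simp: is_triangle_def)
    ultimately show ?thesis using min.cobounded1[of a "min b c"] by linarith
  qed
  have "dist X Y \<le> dist X A + dist A B + dist Y B"
    using dist_triangle[of X Y A] dist_triangle[of A Y B] dist_commute[of Y B] by linarith
  thus ?thesis using h(2,3) ab m by (smt (verit))
qed

lemma sqrt2_le: assumes "0 \<le> (u::real)" "0 \<le> v" shows "sqrt (u^2 + v^2) \<le> u + v"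
proof -
  have "u^2+v^2 \<le> (u+v)^2" using assms by (simp add: power2_eq_square algebra_simps)
  hence "sqrt(u^2+v^2) \<le> sqrt((u+v)^2)" by (rule real_sqrt_le_mono)
  thus ?thesis using assms by simp
qed

lemma dist3_le: "dist ((x1::real), (x2::real), (x3::real)) (y1, y2, y3) \<le> dist x1 y1 + dist x2 y2 + dist x3 y3"
proof -
  have "dist (x1, x2, x3) (y1, y2, y3) \<le> dist x1 y1 + dist (x2,x3) (y2,y3)"
    unfolding dist_Pair_Pair[of x1] by (rule sqrt2_le) auto
  moreover have "dist (x2,x3) (y2,y3) \<le> dist x2 y2 + dist x3 y3"
    unfolding dist_Pair_Pair by (rule sqrt2_le) auto
  ultimately show ?thesis by simp
qed

lemma absdist: "\<bar>dist (X::point) Y - dist A B\<bar> \<le> dist X A + dist Y B"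
  by (smt (verit) dist_commute dist_triangle)

definition Kset :: "real \<Rightarrow> real \<Rightarrow> real \<Rightarrow> (real \<times> real \<times> real) set" where
  "Kset a b c = {(u,v,w). mset [u,v,w] = mset [a,b,c]}"

lemma Kset_finite: "finite (Kset a b c)"
proof -
  have "Kset a b c \<subseteq> {a,b,c} \<times> {a,b,c} \<times> {a,b,c}"
  proof
    fix t assume "t \<in> Kset a b c"
    then obtain u v w where t: "t = (u,v,w)" and m: "mset [u,v,w] = mset [a,b,c]" unfolding Kset_def by auto
    have "set_mset (mset [u,v,w]) = set_mset (mset [a,b,c])" using m by simp
    hence "{u,v,w} = {a,b,c}" by simp
    thus "t \<in> {a,b,c} \<times> {a,b,c} \<times> {a,b,c}" using t by blast
  qed
  thus ?thesis by (rule finite_subset) auto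
qed

lemma eps_infdist:
  assumes "eps_congruent (a,b,c) e X Y Z"
  shows "infdist (dist X Y, dist Y Z, dist Z X) (Kset a b c) \<le> 6 * (e * min a (min b c))"
proof -
  obtain A B C where h: "congruent_tri (a,b,c) A B C" "dist X A \<le> e * min a (min b c)"
    "dist Y B \<le> e * min a (min b c)" "dist Z C \<le> e * min a (min b c)"
    using assms(1) unfolding eps_congruent_def by auto
  have "(dist A B, dist B C, dist C A) \<in> Kset a b c" using h(1)
    unfolding Kset_def congruent_tri_def by simp
  hence "infdist (dist X Y, dist Y Z, dist Z X) (Kset a b c) \<le> dist (dist X Y, dist Y Z, dist Z X) (dist A B, dist B C, dist C A)"
    by (rule infdist_le)
  also have "\<dots> \<le> dist (dist X Y) (dist A B) + dist (dist Y Z) (dist B C) + dist (dist Z X) (dist C A)"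
    by (rule dist3_le)
  also have "\<dots> \<le> 6 * (e * min a (min b c))"
    using h(2-4) absdist[of X Y A B] absdist[of Y Z B C] absdist[of Z X C A]
    unfolding dist_real_def by linarith
  finally show ?thesis .
qed


lemma common_subseq:
  fixes s :: "nat \<Rightarrow> 'v \<Rightarrow> point"
  assumes "finite V" "\<forall>v\<in>V. bounded (range (\<lambda>n. s n v))"
  shows "\<exists>r l. strict_mono r \<and> (\<forall>v\<in>V. (\<lambda>n. s (r n) v) \<longlonglongrightarrow> l v)"
  using assms
proof (induction V rule: finite_induct)
  case empty
  have "strict_mono (\<lambda>n::nat. n)" by (simp add: strict_mono_def)
  then show ?case by blast
next
  case (insert w F)
  then obtain r l where r: "strict_mono r" "\<forall>v\<in>F. (\<lambda>n. s (r n) v) \<longlonglongrightarrow> l v" by auto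
  have "bounded (range (\<lambda>n. s n w))" using insert.prems by auto
  hence "bounded (range (\<lambda>n. s (r n) w))" by (rule bounded_subset) auto
  then obtain lw r2 where r2: "strict_mono r2" "((\<lambda>n. s (r n) w) \<circ> r2) \<longlonglongrightarrow> lw"
    using bounded_imp_convergent_subsequence by blast
  have sm: "strict_mono (r \<circ> r2)" using r(1) r2(1) by (simp add: strict_mono_def)
  have "\<forall>v\<in>insert w F. (\<lambda>n. s ((r \<circ> r2) n) v) \<longlonglongrightarrow> (l(w := lw)) v"
  proof
    fix v assume v: "v \<in> insert w F"
    show "(\<lambda>n. s ((r \<circ> r2) n) v) \<longlonglongrightarrow> (l(w := lw)) v"
    proof (cases "v = w")
      case True
      then show ?thesis using r2(2) by (simp add: o_def)
    next
      case False
      then have "v \<in> F" using v by auto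
      then have "((\<lambda>n. s (r n) v) \<circ> r2) \<longlonglongrightarrow> l v" using r(2) r2(1) LIMSEQ_subseq_LIMSEQ by blast
      then show ?thesis using False by (simp add: o_def)
    qed
  qed
  then show ?case using sm by blast
qed


theorem lemma2p1:
  fixes V :: "'v set" and E :: "'v set set" and T :: "real \<times> real \<times> real"
  assumes "three_graph V E" and "dense3 V E" and "is_triangle T"
  shows "forbidden V E T \<longleftrightarrow> exactly_forbidden V E T"
proof -
  obtain a b c where T: "T = (a,b,c)" by (cases T)
  have tri: "is_triangle (a,b,c)" using assms(3) T by simp
  have pos: "0<a" "0<b" "0<c" using tri by (auto simp: is_triangle_def)
  define m where "m = min a (min b c)"
  have m0: "m > 0" using pos by (simp add: m_def)
  have finV: "finite V" using assms(1) by (simp add: three_graph_def)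
  have Esub: "\<forall>e\<in>E. e \<subseteq> V \<and> card e = 3" using assms(1) by (simp add: three_graph_def)
  show ?thesis
  proof
    assume F: "forbidden V E T"
    show "exactly_forbidden V E T" unfolding exactly_forbidden_def
    proof
      assume "\<exists>p::'v \<Rightarrow> point. \<forall>e\<in>E. \<exists>x y z. e = {x,y,z} \<and> congruent_tri T (p x) (p y) (p z)"
      then obtain p :: "'v \<Rightarrow> point" where p: "\<forall>e\<in>E. \<exists>x y z. e = {x,y,z} \<and> congruent_tri T (p x) (p y) (p z)"
        by blast
      obtain \<epsilon> where \<epsilon>: "\<epsilon>>0" "\<forall>P::point set. finite P \<and> card P = card V \<longrightarrow> \<not> contains_copy P (tri_edges T P \<epsilon>) V E"
        using F unfolding forbidden_def by blast
      obtain q where q: "inj_on q V" "\<forall>v\<in>V. dist (q v) (p v) \<le> \<epsilon>*m"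
        using perturb[OF finV, of "\<epsilon>*m" p] \<epsilon>(1) m0 by auto
      have "contains_copy (q`V) (tri_edges T (q`V) \<epsilon>) V E"
        unfolding contains_copy_def
      proof (intro exI[of _ q] conjI ballI)
        show "inj_on q V" by fact
        show "q`V \<subseteq> q`V" by simp
        fix e assume e: "e \<in> E"
        then obtain x y z where xyz: "e = {x,y,z}" "congruent_tri T (p x) (p y) (p z)" using p by blast
        have "card {x,y,z} = 3" using Esub e xyz by auto
        hence d: "x\<noteq>y" "y\<noteq>z" "x\<noteq>z" by (auto simp: card_insert_if split: if_splits)
        have inV: "x\<in>V" "y\<in>V" "z\<in>V" using Esub e xyz by auto
        have qd: "q x \<noteq> q y" "q y \<noteq> q z" "q x \<noteq> q z" using d inV q(1) by (meson inj_onD)+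
        have c1: "congruent_tri (a,b,c) (p x) (p y) (p z)" using xyz(2) T by simp
        have c2: "dist (q x) (p x) \<le> \<epsilon>*m" "dist (q y) (p y) \<le> \<epsilon>*m" "dist (q z) (p z) \<le> \<epsilon>*m"
          using q(2) inV by auto
        have "eps_congruent T \<epsilon> (q x) (q y) (q z)" unfolding T eps_congruent_def prod.case
          using c1 c2 unfolding m_def by blast
        then show "q`e \<in> tri_edges T (q`V) \<epsilon>" unfolding tri_edges_def using xyz inV qd by blast
      qed
      moreover have "card (q`V) = card V" using card_image q(1) by blast
      ultimately show False using \<epsilon>(2) finV by auto
    qed
  next
    assume X: "exactly_forbidden V E T"
    show "forbidden V E T"
    proof (rule ccontr)
      assume nF: "\<not> forbidden V E T"
      have E0: "E \<noteq> {}" using X unfolding exactly_forbidden_def by auto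
      have ex: "\<forall>n::nat. \<exists>g. inj_on g V \<and> (\<forall>e\<in>E. \<exists>x' y' z'. g ` e = {x',y',z'} \<and> eps_congruent T (1 / real (Suc n)) x' y' z')"
      proof
        fix n :: nat
        have "(1 / real (Suc n)) > 0" by simp
        then obtain P :: "point set" where "contains_copy P (tri_edges T P (1 / real (Suc n))) V E"
          using nF unfolding forbidden_def by blast
        then obtain g where g: "inj_on g V" "\<forall>e\<in>E. g ` e \<in> tri_edges T P (1 / real (Suc n))"
          unfolding contains_copy_def by blast
        have "\<forall>e\<in>E. \<exists>x' y' z'. g ` e = {x',y',z'} \<and> eps_congruent T (1 / real (Suc n)) x' y' z'"
        proof
          fix e assume "e \<in> E"
          then have "g ` e \<in> tri_edges T P (1 / real (Suc n))" using g(2) by blast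
          then show "\<exists>x' y' z'. g ` e = {x',y',z'} \<and> eps_congruent T (1 / real (Suc n)) x' y' z'"
            unfolding tri_edges_def by blast
        qed
        then show "\<exists>g. inj_on g V \<and> (\<forall>e\<in>E. \<exists>x' y' z'. g ` e = {x',y',z'} \<and> eps_congruent T (1 / real (Suc n)) x' y' z')"
          using g(1) by blast
      qed
      obtain f where f0: "\<forall>n. inj_on (f n) V \<and> (\<forall>e\<in>E. \<exists>x' y' z'. f n ` e = {x',y',z'} \<and> eps_congruent T (1 / real (Suc n)) x' y' z')"
        using choice[OF ex] by blast
      have f: "\<And>n. inj_on (f n) V" "\<And>n. \<forall>e\<in>E. \<exists>x' y' z'. f n ` e = {x',y',z'} \<and> eps_congruent T (1 / real (Suc n)) x' y' z'"
        using f0 by blast+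
      have ec: "eps_congruent T (1 / real (Suc n)) (f n x) (f n y) (f n z)"
        if "e \<in> E" "e = {x,y,z}" "x\<noteq>y" "y\<noteq>z" "x\<noteq>z" for n e x y z
      proof -
        have "\<exists>x' y' z'. f n ` e = {x',y',z'} \<and> eps_congruent T (1 / real (Suc n)) x' y' z'"
          using f(2)[of n] that(1) by (rule bspec)
        then obtain x' y' z' where h: "f n ` e = {x',y',z'}" "eps_congruent T (1 / real (Suc n)) x' y' z'"
          by (elim exE conjE)
        have inV: "x\<in>V" "y\<in>V" "z\<in>V" using Esub that by auto
        have qd: "f n x \<noteq> f n y" "f n y \<noteq> f n z" "f n x \<noteq> f n z" using that inV f(1)[of n] by (meson inj_onD)+
        have "{x',y',z'} = {f n x, f n y, f n z}" using h(1) that(2) by simp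
        then show ?thesis using eps_perm[OF h(2)] qd by blast
      qed
      define M where "M = 3*(a+b+c)"
      have M0: "M \<ge> 0" using pos by (simp add: M_def)
      have pairb: "dist (f n u) (f n w) \<le> M" if "e \<in> E" "u \<in> e" "w \<in> e" for n e u w
      proof -
        have "card e = 3" using Esub that(1) by blast
        then obtain x y z where xyz: "e = {x,y,z}" "x\<noteq>y" "y\<noteq>z" "x\<noteq>z"
          unfolding card_3_iff by blast
        have h: "eps_congruent (a,b,c) (1 / real (Suc n)) (f n x) (f n y) (f n z)"
          using ec[OF that(1) xyz] T by simp
        have b0: "0 \<le> 1 / real (Suc n)" "1 / real (Suc n) \<le> 1" by auto
        have d1: "dist (f n x) (f n y) \<le> M" using eps_bound[OF h tri b0] by (simp add: M_def)
        have d2: "dist (f n y) (f n z) \<le> M" using eps_bound[OF eps_rot[OF h] tri b0] by (simp add: M_def)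
        have d3: "dist (f n z) (f n x) \<le> M" using eps_bound[OF eps_rot[OF eps_rot[OF h]] tri b0] by (simp add: M_def)
        show ?thesis using that(2,3) xyz(1) d1 d2 d3 M0 by (auto simp: dist_commute)
      qed
      obtain vs where vs: "distinct vs" "set vs = V"
        "\<And>i. 2 \<le> i \<Longrightarrow> i < length vs \<Longrightarrow> (\<exists>e\<in>E. e \<subseteq> set (take (Suc i) vs) \<and> vs ! i \<in> e)"
        using assms(2) unfolding dense3_def by blast
      have len: "length vs \<ge> 3"
      proof -
        obtain e where "e \<in> E" using E0 by blast
        hence "e \<subseteq> V" "card e = 3" using Esub by auto
        hence "3 \<le> card V" using finV card_mono by metis
        thus ?thesis using vs(1,2) distinct_card by metis
      qed
      have chain: "\<forall>i. i < length vs \<longrightarrow> dist (f n (vs!i)) (f n (vs!0)) \<le> real i * M" for n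
      proof
        fix i show "i < length vs \<longrightarrow> dist (f n (vs!i)) (f n (vs!0)) \<le> real i * M"
        proof (induction i rule: less_induct)
          case (less i)
          show ?case
          proof
            assume il: "i < length vs"
            consider "i = 0" | "i = 1" | "2 \<le> i" by linarith
            then show "dist (f n (vs!i)) (f n (vs!0)) \<le> real i * M"
            proof cases
              case 1 then show ?thesis by simp
            next
              case 2
              obtain e where e: "e \<in> E" "e \<subseteq> set (take 3 vs)" using vs(3)[of 2] len
                by (auto simp: numeral_3_eq_3)
              have "card (set (take 3 vs)) \<le> 3" using card_length[of "take 3 vs"] by simp
              moreover have "card e = 3" using Esub e(1) by auto
              moreover have "card e \<le> card (set (take 3 vs))" using e(2) card_mono by blast
              ultimately have "e = set (take 3 vs)" using e(2) card_subset_eq by (metis List.finite_set le_antisym)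
              moreover have "vs!0 \<in> set (take 3 vs)" "vs!1 \<in> set (take 3 vs)"
                using nth_mem[of 0 "take 3 vs"] nth_mem[of 1 "take 3 vs"] len by auto
              ultimately have "dist (f n (vs!1)) (f n (vs!0)) \<le> M" using pairb[OF e(1)] by blast
              then show ?thesis using 2 by simp
            next
              case 3
              obtain e where e: "e \<in> E" "e \<subseteq> set (take (Suc i) vs)" "vs!i \<in> e" using vs(3)[OF 3 il] by blast
              have "card e = 3" using Esub e(1) by auto
              then obtain x y z where "e = {x,y,z}" "x\<noteq>y" "y\<noteq>z" "x\<noteq>z"
                unfolding card_3_iff by blast
              then obtain u where u: "u \<in> e" "u \<noteq> vs!i" by blast
              then have "u \<in> set (take (Suc i) vs)" using e(2) by blast
              then obtain j where j: "j < length (take (Suc i) vs)" "u = take (Suc i) vs ! j"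
                by (metis in_set_conv_nth)
              have jl: "j < Suc i" using j(1) by simp
              have uj: "u = vs!j" using j by simp
              have "j \<noteq> i" using u(2) uj by blast
              hence ji: "j < i" using jl by simp
              have "dist (f n (vs!j)) (f n (vs!0)) \<le> real j * M" using less.IH[OF ji] ji il by simp
              moreover have "dist (f n (vs!i)) (f n (vs!j)) \<le> M" using pairb[OF e(1) e(3) u(1)] uj by simp
              moreover have "real j * M + M \<le> real i * M"
              proof -
                have "real j + 1 \<le> real i" using ji by simp
                hence "(real j + 1) * M \<le> real i * M" using M0 by (rule mult_right_mono)
                thus ?thesis by (simp add: algebra_simps)
              qed
              ultimately show ?thesis using dist_triangle[of "f n (vs!i)" "f n (vs!0)" "f n (vs!j)"] by linarith
            qed
          qed
        qed
      qed
      define g where "g n v = f n v - f n (vs!0)" for n v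
      have gd: "dist (g n u) (g n w) = dist (f n u) (f n w)" for n u w by (simp add: g_def dist_norm)
      have gb: "\<forall>v\<in>V. bounded (range (\<lambda>n. g n v))"
      proof
        fix v assume "v \<in> V"
        then obtain i where i: "i < length vs" "v = vs!i" using vs(2) by (metis in_set_conv_nth)
        have "norm (g n v) \<le> real (length vs) * M" for n
        proof -
          have "norm (g n v) = dist (f n (vs!i)) (f n (vs!0))" using i by (simp add: g_def dist_norm)
          also have "\<dots> \<le> real i * M" using chain i by blast
          also have "\<dots> \<le> real (length vs) * M" using i M0 by (intro mult_right_mono) auto
          finally show ?thesis .
        qed
        then show "bounded (range (\<lambda>n. g n v))" unfolding bounded_iff by blast
      qed
      obtain r l where rl: "strict_mono r" "\<forall>v\<in>V. (\<lambda>n. g (r n) v) \<longlonglongrightarrow> l v"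
        using common_subseq[OF finV gb] by blast
      have "\<forall>e\<in>E. \<exists>x y z. e = {x,y,z} \<and> congruent_tri T (l x) (l y) (l z)"
      proof
        fix e assume e: "e \<in> E"
        have "card e = 3" using Esub e by blast
        then obtain x y z where xyz: "e = {x,y,z}" "x\<noteq>y" "y\<noteq>z" "x\<noteq>z"
          unfolding card_3_iff by blast
        have inV: "x\<in>V" "y\<in>V" "z\<in>V" using Esub e xyz by auto
        define K where "K = Kset a b c"
        define D where "D n = (dist (g n x) (g n y), dist (g n y) (g n z), dist (g n z) (g n x))" for n
        define Dl where "Dl = (dist (l x) (l y), dist (l y) (l z), dist (l z) (l x))"
        have Dinf: "infdist (D n) K \<le> 6 * (1 / real (Suc n) * m)" for n
        proof -
          have "eps_congruent (a,b,c) (1 / real (Suc n)) (f n x) (f n y) (f n z)"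
            using ec[OF e xyz] T by simp
          from eps_infdist[OF this] show ?thesis by (simp add: D_def K_def m_def gd)
        qed
        have "(\<lambda>n. D (r n)) \<longlonglongrightarrow> Dl"
          unfolding D_def Dl_def using rl(2) inV by (intro tendsto_intros) auto
        then have lim1: "(\<lambda>n. infdist (D (r n)) K) \<longlonglongrightarrow> infdist Dl K" by (rule tendsto_infdist)
        have "(\<lambda>n. 6 * (inverse (real (Suc n)) * m)) \<longlonglongrightarrow> 6 * (0 * m)"
          by (intro tendsto_mult tendsto_const LIMSEQ_inverse_real_of_nat)
        then have lim2: "(\<lambda>n. 6 * (1 / real (Suc n) * m)) \<longlonglongrightarrow> 0" by (simp add: inverse_eq_divide)
        have "\<forall>n\<ge>0. infdist (D (r n)) K \<le> 6 * (1 / real (Suc n) * m)"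
        proof (intro allI impI)
          fix n :: nat
          have "n \<le> r n" using rl(1) by (rule seq_suble)
          hence "1 / real (Suc (r n)) \<le> 1 / real (Suc n)" by (intro divide_left_mono) auto
          hence "1 / real (Suc (r n)) * m \<le> 1 / real (Suc n) * m" using m0 by (intro mult_right_mono) auto
          hence "6 * (1 / real (Suc (r n)) * m) \<le> 6 * (1 / real (Suc n) * m)" by linarith
          then show "infdist (D (r n)) K \<le> 6 * (1 / real (Suc n) * m)" using Dinf[of "r n"] by linarith
        qed
        then have "infdist Dl K \<le> 0" using LIMSEQ_le[OF lim1 lim2] by blast
        then have "infdist Dl K = 0" using infdist_nonneg[of Dl K] by linarith
        moreover have "closed K" unfolding K_def by (rule finite_imp_closed[OF Kset_finite])
        moreover have "K \<noteq> {}" unfolding K_def Kset_def by auto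
        ultimately have "Dl \<in> K" using in_closed_iff_infdist_zero by blast
        then have "congruent_tri T (l x) (l y) (l z)"
          unfolding K_def Kset_def Dl_def congruent_tri_def T by simp
        then show "\<exists>x y z. e = {x,y,z} \<and> congruent_tri T (l x) (l y) (l z)" using xyz by blast
      qed
      then show False using X unfolding exactly_forbidden_def by blast
    qed
  qed
qed

end
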